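(* Let $G,H\in\mathcal{C}_{n,m}$ and suppose $W_G(x,y)-W_H(x,y)=(1-xy)P(x,y)$ for some nonnegative polynomial $P$. Then $N_i^{(k)}(H)\le N_i^{(k)}(G)$ for every $i\in\{0,1,\ldots,m\}$ and every $k\in\{1,2,\ldots,n\}$.
   Context: $\mathcal{C}_{n,m}$ denotes the set of all connected simple graphs on $n$ vertices and $m$ edges. For a graph $G$ with vertex set $V$, $\kappa(G)$ is its number of connected components, $r(G)=|V|-\kappa(G)$, $c(G)=|E(G)|-|V|+\kappa(G)$. $\mathcal{S}(G)$ is the set of all spanning subgraphs of $G$. The Whitney polynomial is $W_G(x,y)=\sum_{H\in\mathcal{S}(G)}x^{r(G)-r(H)}y^{c(H)}$. A bivariate polynomial is nonnegative if all its coefficients (in the monomial basis $x^iy^j$) are nonnegative real numbers. For $i\in\{0,\ldots,m\}$ and $k\in\{1,\ldots,n\}$, $N_i^{(k)}(G)$ is the number of spanning subgraphs of $G$ having exactly $i$ edges and at most $k$ connected components. *)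

theory Defs
  imports "HOL-Computational_Algebra.Polynomial"
begin

definition simple_graph :: "'a set \<Rightarrow> 'a set set \<Rightarrow> bool" where
  "simple_graph V E \<longleftrightarrow> finite V \<and> (\<forall>e\<in>E. e \<subseteq> V \<and> card e = 2)"

definition adj :: "'a set set \<Rightarrow> ('a \<times> 'a) set" where
  "adj F = {(u, v). {u, v} \<in> F}"

definition conn_rel :: "'a set \<Rightarrow> 'a set set \<Rightarrow> ('a \<times> 'a) set" where
  "conn_rel V F = {(u, v). u \<in> V \<and> v \<in> V \<and> (u, v) \<in> (adj F)\<^sup>*}"

definition kappa :: "'a set \<Rightarrow> 'a set set \<Rightarrow> nat" where
  "kappa V F = card (V // conn_rel V F)"

definition connected_graph :: "'a set \<Rightarrow> 'a set set \<Rightarrow> bool" where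
  "connected_graph V E \<longleftrightarrow> kappa V E = 1"

definition in_C :: "nat \<Rightarrow> nat \<Rightarrow> 'a set \<Rightarrow> 'a set set \<Rightarrow> bool" where
  "in_C n m V E \<longleftrightarrow> simple_graph V E \<and> connected_graph V E \<and> card V = n \<and> card E = m"

definition rk :: "'a set \<Rightarrow> 'a set set \<Rightarrow> nat" where
  "rk V F = card V - kappa V F"

definition nullity :: "'a set \<Rightarrow> 'a set set \<Rightarrow> nat" where
  "nullity V F = card F + kappa V F - card V"

text \<open>Bivariate real polynomials are represented as real poly poly:
  the outer variable is x, the inner variable is y, so the monomial
  x^a y^b is monom (monom 1 b) a.\<close>
definition mono_xy :: "nat \<Rightarrow> nat \<Rightarrow> real poly poly" where
  "mono_xy a b = monom (monom 1 b) a"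

definition whitney :: "'a set \<Rightarrow> 'a set set \<Rightarrow> real poly poly" where
  "whitney V E = (\<Sum>F\<in>Pow E. mono_xy (rk V E - rk V F) (nullity V F))"

definition nonneg_poly2 :: "real poly poly \<Rightarrow> bool" where
  "nonneg_poly2 P \<longleftrightarrow> (\<forall>a b. coeff (coeff P a) b \<ge> 0)"

definition N_count :: "'a set \<Rightarrow> 'a set set \<Rightarrow> nat \<Rightarrow> nat \<Rightarrow> nat" where
  "N_count V E i k = card {F. F \<subseteq> E \<and> card F = i \<and> kappa V F \<le> k}"

end

theory Submission
  imports Defs
begin

lemma sum_ind_card:
  assumes fin: "finite A"
  shows "(\<Sum>x\<in>A. if Q x then 1 else 0) = real (card {x\<in>A. Q x})"
proof -
  have "(\<Sum>x\<in>A. if Q x then 1 else (0::real)) = (\<Sum>x\<in>A. of_bool (Q x))"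
    by (rule sum.cong) auto
  also have "\<dots> = of_nat (card (A \<inter> {x. Q x}))" using fin by simp
  also have "A \<inter> {x. Q x} = {x\<in>A. Q x}" by blast
  finally show ?thesis by simp
qed

lemma sym_adj: "sym (adj F)"
  unfolding adj_def sym_def by (auto simp: insert_commute)

lemma sym_adj_rtrancl: "sym ((adj F)\<^sup>*)"
  by (rule sym_rtrancl[OF sym_adj])

lemma conn_img: "x \<in> V \<Longrightarrow> conn_rel V F `` {x} = {y\<in>V. (x,y) \<in> (adj F)\<^sup>*}"
  unfolding conn_rel_def by auto

lemma quot_img: "V // conn_rel V F = (\<lambda>x. conn_rel V F `` {x}) ` V"
  unfolding quotient_def by auto

lemma cls_eq_iff:
  assumes x: "x \<in> V" and y: "y \<in> V"
  shows "(conn_rel V F `` {x} = conn_rel V F `` {y}) \<longleftrightarrow> (x,y) \<in> (adj F)\<^sup>*"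
proof
  assume eq: "conn_rel V F `` {x} = conn_rel V F `` {y}"
  have "y \<in> conn_rel V F `` {y}" using y by (simp add: conn_rel_def)
  then have "y \<in> conn_rel V F `` {x}" using eq by simp
  then show "(x,y) \<in> (adj F)\<^sup>*" by (simp add: conn_rel_def)
next
  assume h: "(x,y) \<in> (adj F)\<^sup>*"
  have h2: "(y,x) \<in> (adj F)\<^sup>*" using symD[OF sym_adj_rtrancl h] .
  have a: "(y,z) \<in> (adj F)\<^sup>*" if "(x,z) \<in> (adj F)\<^sup>*" for z using rtrancl_trans[OF h2 that] .
  have b: "(x,z) \<in> (adj F)\<^sup>*" if "(y,z) \<in> (adj F)\<^sup>*" for z using rtrancl_trans[OF h that] .
  show "conn_rel V F `` {x} = conn_rel V F `` {y}"
    unfolding conn_img[OF x] conn_img[OF y] using a b by blast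
qed

lemma kappa_le: "finite V \<Longrightarrow> kappa V F \<le> card V"
  unfolding kappa_def quot_img by (rule card_image_le)

lemma kappa_ge1: "finite V \<Longrightarrow> V \<noteq> {} \<Longrightarrow> 1 \<le> kappa V F"
  unfolding kappa_def quot_img by (simp add: Suc_le_eq card_gt_0_iff)

lemma kappa_empty: "finite V \<Longrightarrow> kappa V {} = card V"
proof -
  assume fV: "finite V"
  have "inj_on (\<lambda>x. conn_rel V {} `` {x}) V"
  proof (rule inj_onI)
    fix x y assume x: "x \<in> V" and y: "y \<in> V" and e: "conn_rel V {} `` {x} = conn_rel V {} `` {y}"
    have "(x,y) \<in> (adj {})\<^sup>*" using iffD1[OF cls_eq_iff[OF x y] e] .
    moreover have "adj {} = {}" by (simp add: adj_def)
    ultimately show "x = y" by (metis rtrancl_empty pair_in_Id_conv)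
  qed
  then show ?thesis unfolding kappa_def quot_img by (simp add: card_image)
qed

lemma merge_card:
  assumes fin: "finite V" and u: "u \<in> V"
    and refine: "\<And>x y. x\<in>V \<Longrightarrow> y\<in>V \<Longrightarrow> f x = f y \<Longrightarrow> h x = h y"
    and merge: "\<And>x y. x\<in>V \<Longrightarrow> y\<in>V \<Longrightarrow> h x = h y \<Longrightarrow> f x \<noteq> f u \<Longrightarrow> f y \<noteq> f u \<Longrightarrow> f x = f y"
  shows "card (f ` V) \<le> card (h ` V) + 1"
proof -
  define g where "g X = h (SOME x. x \<in> V \<and> f x = X)" for X
  have gf: "g (f x) = h x" if "x \<in> V" for x
  proof -
    have "\<exists>z. z \<in> V \<and> f z = f x" using that by blast
    then have "(SOME z. z \<in> V \<and> f z = f x) \<in> V \<and> f (SOME z. z \<in> V \<and> f z = f x) = f x"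
      by (rule someI_ex)
    then show ?thesis unfolding g_def using refine that by metis
  qed
  have inj: "inj_on g (f ` V - {f u})"
  proof (rule inj_onI)
    fix X Y assume X: "X \<in> f ` V - {f u}" and Y: "Y \<in> f ` V - {f u}" and e: "g X = g Y"
    from X obtain x where x: "x \<in> V" "X = f x" by blast
    from Y obtain y where y: "y \<in> V" "Y = f y" by blast
    have "h x = h y" using e x y gf by simp
    moreover have "f x \<noteq> f u" "f y \<noteq> f u" using X Y x y by auto
    ultimately have "f x = f y" using merge x y by blast
    then show "X = Y" using x y by simp
  qed
  have img: "g ` (f ` V - {f u}) \<subseteq> h ` V" using gf by auto
  have "card (f ` V) = card (f ` V - {f u}) + 1"
  proof -
    have "card (f ` V) > 0" using u fin by (auto simp: card_gt_0_iff)
    then show ?thesis using u fin by (simp add: card_Diff_singleton_if)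
  qed
  also have "card (f ` V - {f u}) = card (g ` (f ` V - {f u}))"
    using inj by (simp add: card_image)
  also have "\<dots> \<le> card (h ` V)" using img fin by (simp add: card_mono)
  finally show ?thesis by simp
qed

lemma adj_insert: "adj (insert {u,v} F) = adj F \<union> {(u,v),(v,u)}"
  unfolding adj_def by (auto simp: doubleton_eq_iff)

lemma rt_split:
  assumes "(x,y) \<in> (S \<union> {(u,v),(v,u)})\<^sup>*"
  shows "(x,y) \<in> S\<^sup>* \<or> (x,u) \<in> S\<^sup>* \<or> (x,v) \<in> S\<^sup>*"
  using assms
proof (induction rule: rtrancl_induct)
  case base then show ?case by simp
next
  case (step y z)
  show ?case
  proof (cases "(x,y) \<in> S\<^sup>*")
    case True
    from step.hyps(2) have "(y,z) \<in> S \<or> (y = u \<and> z = v) \<or> (y = v \<and> z = u)" by blast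
    then show ?thesis using True rtrancl_into_rtrancl[OF True] by blast
  next
    case False then show ?thesis using step.IH by blast
  qed
qed

lemma kappa_insert:
  assumes fin: "finite V" and u: "u \<in> V"
  shows "kappa V F \<le> kappa V (insert {u,v} F) + 1"
proof -
  let ?S = "adj F" and ?T = "adj (insert {u,v} F)"
  have T: "?T = ?S \<union> {(u,v),(v,u)}" by (rule adj_insert)
  have ST: "?S\<^sup>* \<subseteq> ?T\<^sup>*" unfolding T by (rule rtrancl_mono) auto
  have symS: "\<And>a b. (a,b) \<in> ?S\<^sup>* \<Longrightarrow> (b,a) \<in> ?S\<^sup>*" using sym_adj_rtrancl[of F] by (simp add: symD)
  show ?thesis unfolding kappa_def quot_img
  proof (rule merge_card[OF fin u])
    fix x y assume x: "x \<in> V" and y: "y \<in> V" and h: "conn_rel V F `` {x} = conn_rel V F `` {y}"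
    have "(x,y) \<in> ?S\<^sup>*" by (rule iffD1[OF cls_eq_iff[OF x y] h])
    then have "(x,y) \<in> ?T\<^sup>*" using ST by (rule subsetD[rotated])
    then show "conn_rel V (insert {u, v} F) `` {x} = conn_rel V (insert {u, v} F) `` {y}"
      by (rule iffD2[OF cls_eq_iff[OF x y]])
  next
    fix x y assume x: "x \<in> V" and y: "y \<in> V"
      and h: "conn_rel V (insert {u, v} F) `` {x} = conn_rel V (insert {u, v} F) `` {y}"
      and nx: "conn_rel V F `` {x} \<noteq> conn_rel V F `` {u}"
      and ny: "conn_rel V F `` {y} \<noteq> conn_rel V F `` {u}"
    have nxu: "(x,u) \<notin> ?S\<^sup>*" using nx cls_eq_iff[OF x u, where F=F] by simp
    have nyu: "(y,u) \<notin> ?S\<^sup>*" using ny cls_eq_iff[OF y u, where F=F] by simp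
    have xy: "(x,y) \<in> ?T\<^sup>*" using h cls_eq_iff[OF x y, where F="insert {u,v} F"] by simp
    have yx: "(y,x) \<in> ?T\<^sup>*" using h cls_eq_iff[OF y x, where F="insert {u,v} F"] by simp
    have 1: "(x,y) \<in> ?S\<^sup>* \<or> (x,v) \<in> ?S\<^sup>*" using rt_split[OF xy[unfolded T]] nxu by blast
    have 2: "(y,x) \<in> ?S\<^sup>* \<or> (y,v) \<in> ?S\<^sup>*" using rt_split[OF yx[unfolded T]] nyu by blast
    have "(x,y) \<in> ?S\<^sup>*"
    proof (cases "(x,y) \<in> ?S\<^sup>*")
      case False
      then have xv: "(x,v) \<in> ?S\<^sup>*" using 1 by blast
      show ?thesis
      proof (cases "(y,x) \<in> ?S\<^sup>*")
        case True then show ?thesis by (rule symS)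
      next
        case False
        then have "(y,v) \<in> ?S\<^sup>*" using 2 by blast
        then have "(v,y) \<in> ?S\<^sup>*" by (rule symS)
        with xv show ?thesis by (rule rtrancl_trans)
      qed
    qed
    then show "conn_rel V F `` {x} = conn_rel V F `` {y}" using cls_eq_iff[OF x y, where F=F] by simp
  qed
qed

lemma rank_bound:
  assumes "finite V" "finite F" "\<forall>e\<in>F. e \<subseteq> V \<and> card e = 2"
  shows "card V \<le> card F + kappa V F"
  using assms(2,3)
proof (induction F rule: finite_induct)
  case empty then show ?case using kappa_empty[OF assms(1)] by simp
next
  case (insert e F)
  then have "e \<subseteq> V" "card e = 2" by auto
  then obtain u v where e: "e = {u,v}" and u: "u \<in> V" by (auto simp: card_2_iff)
  have "kappa V F \<le> kappa V (insert e F) + 1" using kappa_insert[OF assms(1) u] e by simp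
  then show ?case using insert by simp
qed
lemma coeff_prod:
  "coeff (coeff ((1 - mono_xy 1 1) * P) a) b =
     coeff (coeff P a) b - (if 1 \<le> a \<and> 1 \<le> b then coeff (coeff P (a-1)) (b-1) else 0)"
proof -
  have "(1 - mono_xy 1 1) * P = P - monom (monom 1 1) 1 * P"
    by (simp add: mono_xy_def left_diff_distrib)
  then have "coeff (coeff ((1 - mono_xy 1 1) * P) a) b = coeff (coeff P a) b - coeff (coeff (monom (monom 1 1) 1 * P) a) b"
    by simp
  also have "coeff (coeff (monom (monom 1 1) 1 * P) a) b = (if 1 \<le> a \<and> 1 \<le> b then coeff (coeff P (a-1)) (b-1) else 0)"
    by (simp only: coeff_monom_mult) (auto simp: coeff_monom_mult)
  finally show ?thesis .
qed

lemma coeff_whitney: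
  "coeff (coeff (whitney V E) a) b = (\<Sum>F\<in>Pow E. if rk V E - rk V F = a \<and> nullity V F = b then 1 else 0)"
  unfolding whitney_def mono_xy_def coeff_sum
  by (rule sum.cong) (auto simp: coeff_monom)

definition cW :: "nat \<Rightarrow> 'a set \<Rightarrow> 'a set set \<Rightarrow> nat \<Rightarrow> nat \<Rightarrow> real" where
  "cW n V E i a = (if n \<le> i + a + 1 then coeff (coeff (whitney V E) a) (i + a + 1 - n) else 0)"

lemma cond_lemma: "(1::nat) \<le> q \<Longrightarrow> q \<le> n \<Longrightarrow> n \<le> c + q \<Longrightarrow> (n \<le> i+a+1 \<and> (q - 1 = a \<and> c + q - n = i + a + 1 - n)) \<longleftrightarrow> (a = q - 1 \<and> c = i)"
  by arith

lemma if_if: "(if A then (if B then 1 else 0) else 0) = (if A \<and> B then 1 else (0::real))" by simp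

lemma count_decomp:
  assumes C: "in_C n m V E" and k: "1 \<le> k"
  shows "real (N_count V E i k) = (\<Sum>a<k. cW n V E i a)"
proof -
  have sg: "simple_graph V E" and cn: "kappa V E = 1" and cV: "card V = n"
    using C by (auto simp: in_C_def connected_graph_def)
  have fV: "finite V" and edges: "\<forall>e\<in>E. e \<subseteq> V \<and> card e = 2" using sg by (auto simp: simple_graph_def)
  have fE: "finite E" proof -
    have "E \<subseteq> Pow V" using edges by blast
    then show ?thesis using fV by (meson finite_Pow_iff finite_subset)
  qed
  have Vne: "V \<noteq> {}" proof
    assume "V = {}" then have "kappa V E = 0" by (simp add: kappa_def)
    then show False using cn by simp
  qed
  have rkE: "rk V E = n - 1" using cn cV by (simp add: rk_def)
  have pt: "(if card F = i \<and> kappa V F \<le> k then 1 else 0) =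
            (\<Sum>a<k. (if n \<le> i + a + 1 then (if rk V E - rk V F = a \<and> nullity V F = i + a + 1 - n then 1 else 0) else (0::real)))"
    if F: "F \<subseteq> E" for F
  proof -
    let ?q = "kappa V F"
    have fF: "finite F" using F fE finite_subset by blast
    have q1: "1 \<le> ?q" using kappa_ge1[OF fV Vne] .
    have qn: "?q \<le> n" using kappa_le[OF fV] cV by simp
    have rb: "n \<le> card F + ?q" using rank_bound[OF fV fF] F edges cV by auto
    have each: "(if n \<le> i + a + 1 then (if rk V E - rk V F = a \<and> nullity V F = i + a + 1 - n then 1 else 0) else (0::real))
        = (if a = ?q - 1 then (if card F = i then 1 else 0) else 0)" for a
    proof -
      have rF: "rk V F = n - ?q" by (simp only: rk_def cV)
      have r1: "rk V E - rk V F = ?q - 1" unfolding rF rkE using q1 qn by arith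
      have r2: "nullity V F = card F + ?q - n" by (simp only: nullity_def cV)
      have cond: "(n \<le> i + a + 1 \<and> (rk V E - rk V F = a \<and> nullity V F = i + a + 1 - n)) \<longleftrightarrow> (a = ?q - 1 \<and> card F = i)"
        unfolding r1 r2 by (rule cond_lemma[OF q1 qn rb])
      show ?thesis by (simp only: if_if cond)
    qed
    have "(\<Sum>a<k. (if a = ?q - 1 then (if card F = i then 1 else 0) else (0::real)))
          = (if ?q - 1 \<in> {..<k} then (if card F = i then 1 else 0) else 0)"
      by simp
    moreover have "(?q - 1 \<in> {..<k}) = (?q \<le> k)" using q1 k by auto
    ultimately show ?thesis unfolding each by simp
  qed
  have "real (N_count V E i k) = (\<Sum>F\<in>Pow E. if card F = i \<and> kappa V F \<le> k then 1 else 0)"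
    unfolding N_count_def using sum_ind_card[of "Pow E" "\<lambda>F. card F = i \<and> kappa V F \<le> k"] fE
    by (simp add: Pow_def)
  also have "\<dots> = (\<Sum>F\<in>Pow E. \<Sum>a<k. (if n \<le> i + a + 1 then (if rk V E - rk V F = a \<and> nullity V F = i + a + 1 - n then 1 else 0) else (0::real)))"
    by (rule sum.cong[OF refl], rule pt, simp)
  also have "\<dots> = (\<Sum>a<k. \<Sum>F\<in>Pow E. (if n \<le> i + a + 1 then (if rk V E - rk V F = a \<and> nullity V F = i + a + 1 - n then 1 else 0) else (0::real)))"
    by (rule sum.swap)
  also have "\<dots> = (\<Sum>a<k. cW n V E i a)"
  proof (rule sum.cong[OF refl])
    fix a show "(\<Sum>F\<in>Pow E. (if n \<le> i + a + 1 then (if rk V E - rk V F = a \<and> nullity V F = i + a + 1 - n then 1 else 0) else (0::real))) = cW n V E i a"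
      unfolding cW_def coeff_whitney by (cases "n \<le> i + a + 1") simp_all
  qed
  finally show ?thesis .
qed

theorem mainTheorem3:
  fixes VG VH :: "'a set" and EG EH :: "'a set set" and n m :: nat
    and P :: "real poly poly"
  assumes "in_C n m VG EG" and "in_C n m VH EH"
    and "nonneg_poly2 P"
    and "whitney VG EG - whitney VH EH = (1 - mono_xy 1 1) * P"
  shows "\<forall>i\<in>{0..m}. \<forall>k\<in>{1..n}. N_count VH EH i k \<le> N_count VG EG i k"
proof (intro ballI)
  fix i k assume "i \<in> {0..m}" "k \<in> {1..n}"
  then have k: "1 \<le> k" by simp
  define f where "f a = (if n \<le> i + a + 1 then coeff (coeff P a) (i + a + 1 - n) else 0)" for a
  have diff: "cW n VG EG i a - cW n VH EH i a = f a - (if 1 \<le> a then f (a - 1) else 0)" for a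
  proof -
    have "coeff (coeff (whitney VG EG) a) b - coeff (coeff (whitney VH EH) a) b
          = coeff (coeff P a) b - (if 1 \<le> a \<and> 1 \<le> b then coeff (coeff P (a-1)) (b-1) else 0)" for b
    proof -
      have "coeff (coeff (whitney VG EG) a) b - coeff (coeff (whitney VH EH) a) b = coeff (coeff (whitney VG EG - whitney VH EH) a) b"
        by (simp only: coeff_diff)
      also have "\<dots> = coeff (coeff ((1 - mono_xy 1 1) * P) a) b" by (simp only: assms(4))
      finally show ?thesis by (simp only: coeff_prod)
    qed
    then show ?thesis unfolding cW_def f_def
      by (cases a) (auto simp: Suc_diff_le)
  qed
  have tel: "(\<Sum>a<Suc j. cW n VG EG i a - cW n VH EH i a) = f j" for j
  proof (induction j)
    case 0 then show ?case using diff[of 0] by simp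
  next
    case (Suc j) then show ?case using diff[of "Suc j"] by (simp only: sum.lessThan_Suc) simp
  qed
  have "f (k - 1) \<ge> 0" using assms(3) by (simp add: f_def nonneg_poly2_def)
  then have "(\<Sum>a<k. cW n VG EG i a - cW n VH EH i a) \<ge> 0"
    using tel[of "k-1"] k by simp
  then have "real (N_count VH EH i k) \<le> real (N_count VG EG i k)"
    using count_decomp[OF assms(1) k, of i] count_decomp[OF assms(2) k, of i]
    by (simp add: sum_subtractf)
  then show "N_count VH EH i k \<le> N_count VG EG i k" by simp
qed

end
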